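(* Let $A\in\mathbb{R}^{m\times n}$, $b\in\mathbb{R}^m$ with $\{x:Ax=b\}\neq\emptyset$, and take $\delta=0$. Let $x^*$ be an optimal solution of $\min\{\|x\|_0: Ax=b\}$, let $I^*=\{i: x^*_i\neq0\}$ and $\bar I^*=\{1,\dots,n\}\setminus I^*$. Say that a vector $v\in\mathbb{R}^n_+$ satisfies the null space condition (NSC) if $$\langle v_{I^*},|y_{I^*}|\rangle<\langle v_{\bar I^*},|y_{\bar I^*}|\rangle\quad\text{for every } 0\neq y\in\operatorname{Null}(A).$$ Consider the iterates $x^k,v^k$ generated by the exact penalty decomposition method described in the context (with $\delta=0$). Assume $v^k$ satisfies (NSC) for some nonnegative integer $k$. Then $x^{k+1}=x^*$. If, in addition, $v^{k+1}$ also satisfies (NSC), then $v^{k+l}$ satisfies (NSC) for all $l\ge2$ and $x^{k+l+1}=x^*$ for all $l\ge1$. Consequently, if $v^0$ satisfies (NSC), then $x^k=x^*$ for all $k\ge1$.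
   Context: Exact penalty decomposition method: (S.0) Given a tolerance $\epsilon>0$ and a ratio $\sigma>1$, choose $\rho_0>0$, set $v^0=e$ (the all-ones vector in $\mathbb{R}^n$) and $k:=0$. (S.1) Choose $x^{k+1}\in\arg\min_{x\in\mathbb{R}^n}\{\langle v^k,|x|\rangle:\ \|Ax-b\|\le\delta\}$. (S.2) For each $i$, set $v^{k+1}_i=0$ if $|x^{k+1}_i|>1/\rho_k$ and $v^{k+1}_i=1$ otherwise. (S.3) If $\langle v^{k+1},|x^{k+1}|\rangle\le\epsilon$, stop; otherwise go to (S.4). (S.4) Set $\rho_{k+1}=\sigma\rho_k$, $k:=k+1$, and go to (S.1). Here $\|x\|_0$ is the number of nonzero entries of $x$, $|x|$ the componentwise absolute value, $x_I$ the subvector of $x$ indexed by $I$, and $\operatorname{Null}(A)$ the null space of $A$. Statements about iterates refer to the iterates generated by the method. *)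

theory Defs
  imports "HOL-Analysis.Analysis"
begin

definition vabs :: "real ^ 'n \<Rightarrow> real ^ 'n" where
  "vabs x = (\<chi> i. \<bar>x $ i\<bar>)"

definition l0norm :: "real ^ 'n \<Rightarrow> nat" where
  "l0norm x = card {i. x $ i \<noteq> 0}"

definition supp_idx :: "real ^ 'n \<Rightarrow> 'n set" where
  "supp_idx x = {i. x $ i \<noteq> 0}"

definition null_space :: "real ^ 'n ^ 'm \<Rightarrow> (real ^ 'n) set" where
  "null_space A = {y. A *v y = 0}"

definition l0_optimal :: "real ^ 'n ^ 'm \<Rightarrow> real ^ 'm \<Rightarrow> real ^ 'n \<Rightarrow> bool" where
  "l0_optimal A b x \<longleftrightarrow> A *v x = b \<and> (\<forall>z. A *v z = b \<longrightarrow> l0norm x \<le> l0norm z)"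

definition NSC :: "real ^ 'n ^ 'm \<Rightarrow> real ^ 'n \<Rightarrow> real ^ 'n \<Rightarrow> bool" where
  "NSC A xs v \<longleftrightarrow> (\<forall>i. 0 \<le> v $ i) \<and>
     (\<forall>y \<in> null_space A. y \<noteq> 0 \<longrightarrow>
        (\<Sum>i\<in>supp_idx xs. v $ i * \<bar>y $ i\<bar>) < (\<Sum>i\<in>- supp_idx xs. v $ i * \<bar>y $ i\<bar>))"

definition epd_subprob_min :: "real ^ 'n ^ 'm \<Rightarrow> real ^ 'm \<Rightarrow> real \<Rightarrow> real ^ 'n \<Rightarrow> real ^ 'n \<Rightarrow> bool" where
  "epd_subprob_min A b \<delta> w x \<longleftrightarrow> norm (A *v x - b) \<le> \<delta> \<and>
     (\<forall>z. norm (A *v z - b) \<le> \<delta> \<longrightarrow> w \<bullet> vabs x \<le> w \<bullet> vabs z)"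

definition epd_weights :: "real \<Rightarrow> real ^ 'n \<Rightarrow> real ^ 'n" where
  "epd_weights \<rho> x = (\<chi> i. if \<bar>x $ i\<bar> > 1 / \<rho> then 0 else 1)"

text \<open>The method has not stopped at any of the checks (S.3) performed at iterations 1..k,
  i.e. iteration k+1 (computing x^(k+1), v^(k+1)) is carried out.\<close>
definition epd_alive :: "real \<Rightarrow> (nat \<Rightarrow> real ^ 'n) \<Rightarrow> (nat \<Rightarrow> real ^ 'n) \<Rightarrow> nat \<Rightarrow> bool" where
  "epd_alive \<epsilon> x v k \<longleftrightarrow> (\<forall>j\<in>{1..k}. \<epsilon> < v j \<bullet> vabs (x j))"

definition epd_iterates ::
  "real ^ 'n ^ 'm \<Rightarrow> real ^ 'm \<Rightarrow> real \<Rightarrow> real \<Rightarrow> real \<Rightarrow>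
   (nat \<Rightarrow> real ^ 'n) \<Rightarrow> (nat \<Rightarrow> real ^ 'n) \<Rightarrow> (nat \<Rightarrow> real) \<Rightarrow> bool" where
  "epd_iterates A b \<delta> \<epsilon> \<sigma> x v \<rho> \<longleftrightarrow>
     0 < \<rho> 0 \<and> v 0 = (\<chi> i. 1) \<and>
     (\<forall>k. epd_alive \<epsilon> x v k \<longrightarrow>
        epd_subprob_min A b \<delta> (v k) (x (Suc k)) \<and>
        v (Suc k) = epd_weights (\<rho> k) (x (Suc k)) \<and>
        \<rho> (Suc k) = \<sigma> * \<rho> k)"

end

theory Submission
  imports Defs
begin

lemma inner_split:
  fixes w y :: "real ^ 'n"
  shows "w \<bullet> vabs y = (\<Sum>i\<in>S. w $ i * \<bar>y $ i\<bar>) + (\<Sum>i\<in>- S. w $ i * \<bar>y $ i\<bar>)"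
proof -
  have "w \<bullet> vabs y = (\<Sum>i\<in>UNIV. w $ i * \<bar>y $ i\<bar>)"
    by (simp add: inner_vec_def vabs_def)
  also have "\<dots> = (\<Sum>i\<in>S. w $ i * \<bar>y $ i\<bar>) + (\<Sum>i\<in>- S. w $ i * \<bar>y $ i\<bar>)"
    using sum.Int_Diff[of UNIV "\<lambda>i. w $ i * \<bar>y $ i\<bar>" S]
    by (simp add: Compl_eq_Diff_UNIV)
  finally show ?thesis .
qed

lemma L1:
  assumes N: "NSC A xs w" and M: "epd_subprob_min A b 0 w y" and F: "A *v xs = b"
  shows "y = xs"
proof (rule ccontr)
  assume ne: "y \<noteq> xs"
  define d where "d = y - xs"
  have Ay: "A *v y = b" using M unfolding epd_subprob_min_def by simp
  have min: "w \<bullet> vabs y \<le> w \<bullet> vabs xs" using M F unfolding epd_subprob_min_def by simp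
  have dn: "d \<in> null_space A" "d \<noteq> 0"
    using Ay F ne by (auto simp: d_def null_space_def matrix_vector_mult_diff_distrib)
  let ?I = "supp_idx xs"
  have w0: "\<And>i. 0 \<le> w $ i" using N unfolding NSC_def by auto
  have lt: "(\<Sum>i\<in>?I. w $ i * \<bar>d $ i\<bar>) < (\<Sum>i\<in>- ?I. w $ i * \<bar>d $ i\<bar>)"
    using N dn unfolding NSC_def by auto
  have c1: "(\<Sum>i\<in>- ?I. w $ i * \<bar>y $ i\<bar>) = (\<Sum>i\<in>- ?I. w $ i * \<bar>d $ i\<bar>)"
    by (rule sum.cong) (auto simp: supp_idx_def d_def)
  have c2: "(\<Sum>i\<in>- ?I. w $ i * \<bar>xs $ i\<bar>) = 0"
    by (rule sum.neutral) (auto simp: supp_idx_def)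
  have c3: "(\<Sum>i\<in>?I. w $ i * \<bar>xs $ i\<bar>) - (\<Sum>i\<in>?I. w $ i * \<bar>d $ i\<bar>)
      \<le> (\<Sum>i\<in>?I. w $ i * \<bar>y $ i\<bar>)"
  proof -
    have "\<And>i. w $ i * \<bar>xs $ i\<bar> - w $ i * \<bar>d $ i\<bar> \<le> w $ i * \<bar>y $ i\<bar>"
    proof -
      fix i
      have "\<bar>xs $ i\<bar> - \<bar>d $ i\<bar> \<le> \<bar>y $ i\<bar>" by (simp add: d_def)
      then have "w $ i * (\<bar>xs $ i\<bar> - \<bar>d $ i\<bar>) \<le> w $ i * \<bar>y $ i\<bar>"
        using w0[of i] by (simp add: mult_left_mono)
      then show "w $ i * \<bar>xs $ i\<bar> - w $ i * \<bar>d $ i\<bar> \<le> w $ i * \<bar>y $ i\<bar>"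
        by (simp add: right_diff_distrib)
    qed
    then have "(\<Sum>i\<in>?I. w $ i * \<bar>xs $ i\<bar> - w $ i * \<bar>d $ i\<bar>) \<le> (\<Sum>i\<in>?I. w $ i * \<bar>y $ i\<bar>)"
      by (rule sum_mono)
    then show ?thesis by (simp add: sum_subtractf)
  qed
  have "w \<bullet> vabs xs < w \<bullet> vabs y"
    using inner_split[of w xs ?I] inner_split[of w y ?I] c1 c2 c3 lt by linarith
  then show False using min by simp
qed

lemma L2:
  assumes N: "NSC A xs w" and u0: "\<And>i. 0 \<le> u $ i"
    and le: "\<And>i. i \<in> supp_idx xs \<Longrightarrow> u $ i \<le> w $ i"
    and eq: "\<And>i. i \<notin> supp_idx xs \<Longrightarrow> u $ i = w $ i"
  shows "NSC A xs u"
  unfolding NSC_def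
proof (intro conjI ballI impI allI)
  fix i show "0 \<le> u $ i" by (rule u0)
next
  fix y assume y: "y \<in> null_space A" "y \<noteq> 0"
  have "(\<Sum>i\<in>supp_idx xs. u $ i * \<bar>y $ i\<bar>) \<le> (\<Sum>i\<in>supp_idx xs. w $ i * \<bar>y $ i\<bar>)"
    by (rule sum_mono) (simp add: le mult_right_mono)
  also have "\<dots> < (\<Sum>i\<in>- supp_idx xs. w $ i * \<bar>y $ i\<bar>)"
    using N y unfolding NSC_def by auto
  also have "\<dots> = (\<Sum>i\<in>- supp_idx xs. u $ i * \<bar>y $ i\<bar>)"
    by (rule sum.cong) (auto simp: eq)
  finally show "(\<Sum>i\<in>supp_idx xs. u $ i * \<bar>y $ i\<bar>) < (\<Sum>i\<in>- supp_idx xs. u $ i * \<bar>y $ i\<bar>)" .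
qed

lemma W0: "0 \<le> epd_weights r xs $ i"
  by (simp add: epd_weights_def)

lemma W1: "0 < r \<Longrightarrow> i \<notin> supp_idx xs \<Longrightarrow> epd_weights r xs $ i = 1"
  by (simp add: epd_weights_def supp_idx_def)

lemma W2: "0 < r \<Longrightarrow> r \<le> r' \<Longrightarrow> epd_weights r' xs $ i \<le> epd_weights r xs $ i"
proof -
  assume r: "0 < r" "r \<le> r'"
  have "1 / r' \<le> 1 / r" using r by (simp add: frac_le)
  then show ?thesis by (auto simp: epd_weights_def)
qed

lemma alive_mono: "epd_alive e x v k \<Longrightarrow> j \<le> k \<Longrightarrow> epd_alive e x v j"
  by (auto simp: epd_alive_def)

lemma rho_mono:
  assumes run: "epd_iterates A b d e s x v \<rho>" and s: "1 < s" and al: "epd_alive e x v k"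
  shows "j \<le> Suc k \<Longrightarrow> 0 < \<rho> j \<and> (\<forall>i\<le>j. \<rho> i \<le> \<rho> j)"
proof (induction j)
  case 0
  then show ?case using run by (simp add: epd_iterates_def)
next
  case (Suc j)
  then have IH: "0 < \<rho> j" "\<forall>i\<le>j. \<rho> i \<le> \<rho> j" by auto
  have "epd_alive e x v j" using alive_mono[OF al] Suc.prems by simp
  then have eq: "\<rho> (Suc j) = s * \<rho> j" using run by (simp add: epd_iterates_def)
  have "\<rho> j \<le> \<rho> (Suc j)" using eq IH s by (simp add: mult_le_cancel_right1 less_imp_le)
  moreover have "0 < \<rho> (Suc j)" using eq IH s by simp
  ultimately show ?case using IH by (auto simp: le_Suc_eq)
qed

lemma keyBase:
  assumes run: "epd_iterates A b 0 e s x v \<rho>"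
    and F: "A *v xs = b"
    and Nk: "NSC A xs (v k)" and al: "epd_alive e x v k"
  shows "x (k + 1) = xs \<and> v (k + 1) = epd_weights (\<rho> k) xs"
proof -
  have "epd_subprob_min A b 0 (v k) (x (Suc k))" "v (Suc k) = epd_weights (\<rho> k) (x (Suc k))"
    using run al by (auto simp: epd_iterates_def)
  moreover have "x (Suc k) = xs" using L1[OF Nk _ F] calculation by blast
  ultimately show ?thesis by simp
qed

lemma keyK:
  assumes run: "epd_iterates A b 0 e s x v \<rho>" and s: "1 < s"
    and F: "A *v xs = b"
    and Nk: "NSC A xs (v k)" and Nk1: "NSC A xs (v (Suc k))"
  shows "epd_alive e x v (k + l) \<Longrightarrow> x (k + l + 1) = xs \<and> v (k + l + 1) = epd_weights (\<rho> (k + l)) xs"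
proof (induction l)
  case 0
  then have "epd_subprob_min A b 0 (v k) (x (Suc k))" "v (Suc k) = epd_weights (\<rho> k) (x (Suc k))"
    using run by (auto simp: epd_iterates_def)
  moreover have "x (Suc k) = xs" using L1[OF Nk _ F] calculation by blast
  ultimately show ?case by simp
next
  case (Suc l)
  have al: "epd_alive e x v (k + l)" using Suc.prems by (rule alive_mono) simp
  then have IH: "x (k + l + 1) = xs" "v (k + l + 1) = epd_weights (\<rho> (k + l)) xs"
    using Suc.IH by auto
  have alk: "epd_alive e x v k" using al by (rule alive_mono) simp
  have v1: "v (Suc k) = epd_weights (\<rho> k) xs"
    using keyBase[OF run F Nk alk] by simp
  have rk: "0 < \<rho> k" "\<rho> k \<le> \<rho> (k + l)"
    using rho_mono[OF run s Suc.prems, of "k + l"] rho_mono[OF run s Suc.prems, of "k"] by auto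
  have rb: "0 < \<rho> (k + l)" using rk by linarith
  have N: "NSC A xs (v (k + l + 1))"
    unfolding IH(2)
    apply (rule L2[OF Nk1[unfolded v1]])
      apply (rule W0)
     apply (rule W2[OF rk])
    apply (simp add: W1[OF rk(1)] W1[OF rb])
    done
  have al2: "epd_alive e x v (k + Suc l)" by (rule Suc.prems)
  then have "epd_subprob_min A b 0 (v (k + l + 1)) (x (k + Suc l + 1))"
      "v (k + Suc l + 1) = epd_weights (\<rho> (k + Suc l)) (x (k + Suc l + 1))"
    using run by (auto simp: epd_iterates_def)
  moreover have "x (k + Suc l + 1) = xs" using L1[OF N _ F] calculation by blast
  ultimately show ?case by simp
qed

theorem theorem3p3:
  fixes A :: "real ^ 'n ^ 'm" and b :: "real ^ 'm" and xs :: "real ^ 'n"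
    and \<epsilon> \<sigma> :: real
    and x v :: "nat \<Rightarrow> real ^ 'n" and \<rho> :: "nat \<Rightarrow> real" and k :: nat
  assumes feas: "{z. A *v z = b} \<noteq> {}"
    and eps: "0 < \<epsilon>" and sigma: "1 < \<sigma>"
    and opt: "l0_optimal A b xs"
    and run: "epd_iterates A b 0 \<epsilon> \<sigma> x v \<rho>"
  shows "(NSC A xs (v k) \<longrightarrow> epd_alive \<epsilon> x v k \<longrightarrow> x (k + 1) = xs)
    \<and> (NSC A xs (v k) \<and> NSC A xs (v (k + 1)) \<longrightarrow>
         (\<forall>l\<ge>2. epd_alive \<epsilon> x v (k + l - 1) \<longrightarrow> NSC A xs (v (k + l))) \<and>
         (\<forall>l\<ge>1. epd_alive \<epsilon> x v (k + l) \<longrightarrow> x (k + l + 1) = xs))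
    \<and> (NSC A xs (v 0) \<longrightarrow> (\<forall>j\<ge>1. epd_alive \<epsilon> x v (j - 1) \<longrightarrow> x j = xs))"
proof (intro conjI impI allI)
  have F: "A *v xs = b" using opt by (simp add: l0_optimal_def)
  {
    assume N: "NSC A xs (v k)" and al: "epd_alive \<epsilon> x v k"
    then have "epd_subprob_min A b 0 (v k) (x (Suc k))"
      using run by (auto simp: epd_iterates_def)
    then show "x (k + 1) = xs" using L1[OF N _ F] by simp
  }
  {
    fix l :: nat
    assume N: "NSC A xs (v k) \<and> NSC A xs (v (k + 1))" and l: "2 \<le> l"
      and al: "epd_alive \<epsilon> x v (k + l - 1)"
    obtain l' where l': "l = Suc (Suc l')" using l by (metis add_2_eq_Suc le_Suc_ex)
    have al': "epd_alive \<epsilon> x v (k + Suc l')" using al l' by simp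
    have alk: "epd_alive \<epsilon> x v (k + 0)" using al' by (rule alive_mono) simp
    have v1: "v (Suc k) = epd_weights (\<rho> k) xs"
      using keyK[OF run sigma F, of k 0] N alk by simp
    have vl: "v (k + l) = epd_weights (\<rho> (k + Suc l')) xs"
      using keyK[OF run sigma F, of k "Suc l'"] N al' l' by simp
    have rk: "0 < \<rho> k" "\<rho> k \<le> \<rho> (k + Suc l')"
      using rho_mono[OF run sigma al', of "k + Suc l'"] rho_mono[OF run sigma al', of k] by auto
    have rb: "0 < \<rho> (k + Suc l')" using rk by linarith
    have Nk1: "NSC A xs (epd_weights (\<rho> k) xs)" using N v1 by simp
    show "NSC A xs (v (k + l))"
      unfolding vl
      apply (rule L2[OF Nk1])
        apply (rule W0)
       apply (rule W2[OF rk])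
      apply (metis W1 rk(1) rb)
      done
  }
  {
    fix l :: nat
    assume N: "NSC A xs (v k) \<and> NSC A xs (v (k + 1))" and l: "1 \<le> l"
      and al: "epd_alive \<epsilon> x v (k + l)"
    show "x (k + l + 1) = xs" using keyK[OF run sigma F, of k l] N al by simp
  }
  {
    fix j :: nat
    assume N0: "NSC A xs (v 0)" and j: "1 \<le> j" and al: "epd_alive \<epsilon> x v (j - 1)"
    have al0: "epd_alive \<epsilon> x v 0" by (simp add: epd_alive_def)
    have x1: "x 1 = xs" and v1: "v 1 = epd_weights (\<rho> 0) (x 1)"
      using run L1[OF N0 _ F] al0 by (auto simp: epd_iterates_def)
    have r0: "0 < \<rho> 0" using run by (simp add: epd_iterates_def)
    have v0: "v 0 = (\<chi> i. 1)" using run by (simp add: epd_iterates_def)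
    have N1: "NSC A xs (v 1)"
      unfolding v1 x1
      apply (rule L2[OF N0])
        apply (rule W0)
       apply (simp add: v0 epd_weights_def)
      apply (simp add: v0 W1[OF r0])
      done
    have "x (0 + (j - 1) + 1) = xs"
      using keyK[OF run sigma F, of 0 "j - 1"] N0 N1 al by simp
    then show "x j = xs" using j by simp
  }
qed

end
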